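(* Let $\mathcal{I}$ be a metric space, $d\ge1$, $\boldsymbol{S}\colon\mathcal{I}\to\mathbb{C}^{d\times d}$, $i\mapsto S_i$, continuous, and let $\varLambda\subset\varSigma_{\mathcal{I}}^+$ be a nonempty compact set invariant under the one-sided shift $\theta_+$. Put $\boldsymbol{S}^+_{\upharpoonright\varLambda}(0)=\{\mathrm{Id}_{\mathbb{C}^d}\}$, $\boldsymbol{S}^+_{\upharpoonright\varLambda}(\ell)=\{S_{i_\ell}\cdots S_{i_1}: i(\cdot)\in\varLambda\}$ for $\ell\ge1$, and $\boldsymbol{S}^+_{\upharpoonright\varLambda}=\bigcup_{\ell\ge0}\boldsymbol{S}^+_{\upharpoonright\varLambda}(\ell)$. Then $S_{i_n}\cdots S_{i_1}\to\mathbf{0}_{d\times d}$ as $n\to\infty$ for every $i(\cdot)\in\varLambda$ if and only if both (1) there is $\beta>0$ with $\|A\|_2\le\beta$ for all $A\in\boldsymbol{S}^+_{\upharpoonright\varLambda}$, and (2) there exist a constant $\gamma$ with $0<\gamma<1$ and an integer $N\ge1$ such that $\rho(A)\le\gamma$ for all $A\in\boldsymbol{S}^+_{\upharpoonright\varLambda}(\ell)$ and all $\ell\ge N$.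
   Context: $\varSigma_{\mathcal{I}}^+$ is the set of sequences $i(\cdot)=(i_n)_{n\ge1}$ in $\mathcal{I}$ with the product topology, $\theta_+$ the shift $(i_n)_{n\ge1}\mapsto(i_{n+1})_{n\ge1}$. $\|\cdot\|_2$ is the matrix norm induced by the Euclidean norm on $\mathbb{C}^d$, and $\rho(A)$ is the spectral radius. *)

theory Defs
  imports "HOL-Analysis.Analysis"
begin

text \<open>Sequences i(.) = (i_n)_{n>=1} are represented as functions nat => 'i,
  with index 0 standing for i_1.  The type nat => 'i carries the product topology
  (instance from Function_Topology).\<close>

definition shift_plus :: "(nat \<Rightarrow> 'i) \<Rightarrow> (nat \<Rightarrow> 'i)" where
  "shift_plus i = (\<lambda>n. i (Suc n))"

fun mprod :: "('i \<Rightarrow> complex^'n^'n) \<Rightarrow> (nat \<Rightarrow> 'i) \<Rightarrow> nat \<Rightarrow> complex^'n^'n" where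
  "mprod S i 0 = mat 1"
| "mprod S i (Suc n) = S (i n) ** mprod S i n"

definition Splus :: "('i \<Rightarrow> complex^'n^'n) \<Rightarrow> (nat \<Rightarrow> 'i) set \<Rightarrow> nat \<Rightarrow> (complex^'n^'n) set" where
  "Splus S \<Lambda> l = (if l = 0 then {mat 1} else {mprod S i l | i. i \<in> \<Lambda>})"

definition Splus_all :: "('i \<Rightarrow> complex^'n^'n) \<Rightarrow> (nat \<Rightarrow> 'i) set \<Rightarrow> (complex^'n^'n) set" where
  "Splus_all S \<Lambda> = (\<Union>l. Splus S \<Lambda> l)"

definition norm2 :: "complex^'n^'n \<Rightarrow> real" where
  "norm2 A = onorm (\<lambda>x::complex^'n. A *v x)"

definition spectral_radius :: "complex^'n^'n \<Rightarrow> real" where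
  "spectral_radius A = Max {cmod c | c. \<exists>v::complex^'n. v \<noteq> 0 \<and> A *v v = c *s v}"

end

theory Submission
  imports Defs "Jordan_Normal_Form.Char_Poly"
begin

no_notation Matrix.vec_index (infixl "$" 100)
hide_const (open) Matrix.mat Matrix.vec Matrix.row Matrix.col Determinant.det

lemma bl_mv: "bounded_linear (\<lambda>x::complex^'n. (A::complex^'n^'n) *v x)"
  by (rule matrix_vector_mul_bounded_linear)

lemma norm2_nonneg: "0 \<le> norm2 A"
  unfolding norm2_def by (rule onorm_pos_le[OF bl_mv])

lemma norm2_apply: "norm (A *v x) \<le> norm2 A * norm x"
  unfolding norm2_def by (rule onorm[OF bl_mv])

lemma norm_smult_vec: "norm (c *s (v::complex^'n)) = cmod c * norm v"
  unfolding norm_vec_def by (simp add: norm_mult L2_set_right_distrib)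

lemma norm_axis_c: "norm (axis j (1::complex) :: complex^'n) = 1"
proof -
  have "(\<lambda>k. (norm (axis j (1::complex) $ k))\<^sup>2) = (\<lambda>k::'n. if k = j then 1 else 0)"
    by (auto simp: axis_def)
  then have "(\<Sum>k\<in>UNIV. (norm (axis j (1::complex) $ k))\<^sup>2) = (\<Sum>k\<in>(UNIV::'n set). if k = j then 1 else 0)"
    by metis
  also have "\<dots> = 1" by simp
  finally show ?thesis by (simp add: norm_vec_def L2_set_def)
qed

lemma comp_le_norm2: "norm ((A::complex^'n^'n) $ i $ j) \<le> norm2 A"
proof -
  have "(A *v axis j 1) $ i = A $ i $ j"
    by (simp add: matrix_vector_mult_def axis_def if_distrib cong: if_cong)
  then have "norm (A $ i $ j) \<le> norm (A *v axis j 1)"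
    using Finite_Cartesian_Product.norm_nth_le[of "A *v axis j 1" i] by simp
  also have "\<dots> \<le> norm2 A * norm (axis j (1::complex))" by (rule norm2_apply)
  finally show ?thesis by (simp add: norm_axis_c)
qed

lemma norm_le_norm2: "norm (A::complex^'n^'n) \<le> real (CARD('n)) * real (CARD('n)) * norm2 A"
proof -
  have "norm A \<le> (\<Sum>i\<in>UNIV. norm (A $ i))" by (simp add: norm_vec_def L2_set_le_sum)
  also have "\<dots> \<le> (\<Sum>i\<in>(UNIV::'n set). \<Sum>j\<in>(UNIV::'n set). norm2 A)"
  proof (rule sum_mono)
    fix i
    have "norm (A $ i) \<le> (\<Sum>j\<in>UNIV. norm (A $ i $ j))" by (simp add: norm_vec_def L2_set_le_sum)
    also have "\<dots> \<le> (\<Sum>j\<in>(UNIV::'n set). norm2 A)" by (rule sum_mono) (rule comp_le_norm2)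
    finally show "norm (A $ i) \<le> (\<Sum>j\<in>(UNIV::'n set). norm2 A)" .
  qed
  finally show ?thesis by simp
qed

lemma norm2_le_norm: "norm2 (A::complex^'n^'n) \<le> real (CARD('n)) * real (CARD('n)) * norm A"
  unfolding norm2_def
proof (rule onorm_le)
  fix x :: "complex^'n"
  have "norm (A *v x) \<le> (\<Sum>i\<in>UNIV. norm ((A *v x) $ i))"
    by (simp add: norm_vec_def L2_set_le_sum)
  also have "\<dots> \<le> (\<Sum>i\<in>(UNIV::'n set). \<Sum>j\<in>(UNIV::'n set). norm A * norm x)"
  proof (rule sum_mono)
    fix i
    have "norm ((A *v x) $ i) \<le> norm (\<Sum>j\<in>UNIV. A $ i $ j * x $ j)"
      by (simp add: matrix_vector_mult_def)
    also have "\<dots> \<le> (\<Sum>j\<in>UNIV. norm (A $ i $ j * x $ j))"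
      by (rule norm_sum)
    also have "\<dots> \<le> (\<Sum>j\<in>(UNIV::'n set). norm A * norm x)"
    proof (rule sum_mono)
      fix j
      have "norm (A $ i $ j) \<le> norm A"
        using Finite_Cartesian_Product.norm_nth_le[of "A $ i" j] Finite_Cartesian_Product.norm_nth_le[of A i] by linarith
      moreover have "norm (x $ j) \<le> norm x" by (rule Finite_Cartesian_Product.norm_nth_le)
      ultimately show "norm (A $ i $ j * x $ j) \<le> norm A * norm x"
        by (simp add: norm_mult mult_mono)
    qed
    finally show "norm ((A *v x) $ i) \<le> (\<Sum>j\<in>(UNIV::'n set). norm A * norm x)" .
  qed
  finally show "norm (A *v x) \<le> real CARD('n) * real CARD('n) * norm A * norm x"
    by simp
qed

lemma norm2_mult: "norm2 ((A::complex^'n^'n) ** B) \<le> norm2 A * norm2 B"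
proof -
  have "(\<lambda>x. (A ** B) *v x) = (\<lambda>x. A *v x) \<circ> (\<lambda>x. B *v x)"
    by (auto simp: matrix_vector_mul_assoc)
  then show ?thesis unfolding norm2_def
    using onorm_compose[OF bl_mv bl_mv] by simp
qed

lemma norm2_id: "norm2 (mat 1 :: complex^'n^'n) \<le> 1"
  unfolding norm2_def by (rule onorm_le) simp

lemma norm2_triangle: "norm2 (A::complex^'n^'n) \<le> norm2 B + norm2 (A - B)"
proof -
  have "(\<lambda>x. A *v x) = (\<lambda>x. B *v x + (A - B) *v x)"
    by (auto simp: matrix_vector_mult_diff_rdistrib)
  then show ?thesis unfolding norm2_def
    using onorm_triangle[OF bl_mv bl_mv] by simp
qed

lemma continuous_norm2: "continuous_on UNIV (norm2 :: complex^'n^'n \<Rightarrow> real)"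
proof -
  define C where "C = real (CARD('n)) * real (CARD('n))"
  have C: "C > 0" unfolding C_def by simp
  have lip: "\<bar>norm2 A - norm2 B\<bar> \<le> C * dist A B" for A B :: "complex^'n^'n"
  proof -
    have "norm2 A - norm2 B \<le> C * norm (A - B)"
      using norm2_triangle[of A B] norm2_le_norm[of "A - B"] unfolding C_def by linarith
    moreover have "norm2 B - norm2 A \<le> C * norm (B - A)"
      using norm2_triangle[of B A] norm2_le_norm[of "B - A"] unfolding C_def by linarith
    ultimately show ?thesis by (simp add: dist_norm norm_minus_commute)
  qed
  show ?thesis unfolding continuous_on_iff
  proof (intro ballI allI impI)
    fix x :: "complex^'n^'n" and e :: real assume "e > 0"
    show "\<exists>d>0. \<forall>x'\<in>UNIV. dist x' x < d \<longrightarrow> dist (norm2 x') (norm2 x) < e"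
    proof (intro exI[of _ "e / C"] conjI ballI impI)
      show "e / C > 0" using \<open>e > 0\<close> C by simp
      fix x' assume "dist x' x < e / C"
      then have "C * dist x' x < e" using C by (simp add: field_simps)
      then show "dist (norm2 x') (norm2 x) < e" using lip[of x' x] by (simp add: dist_real_def)
    qed
  qed
qed

definition eig :: "complex^'n^'n \<Rightarrow> complex set" where
  "eig A = {c. \<exists>v. v \<noteq> 0 \<and> A *v v = c *s v}"

lemma sr_eq: "spectral_radius A = Max (cmod ` eig A)"
  unfolding spectral_radius_def eig_def by (rule arg_cong[where f=Max]) auto

lemma eig_le_norm2: "c \<in> eig A \<Longrightarrow> cmod c \<le> norm2 A"
proof -
  assume "c \<in> eig A"
  then obtain v where v: "v \<noteq> 0" "A *v v = c *s v" unfolding eig_def by auto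
  have "cmod c * norm v \<le> norm2 A * norm v"
    using norm2_apply[of A v] v by (simp add: norm_smult_vec)
  then show ?thesis using v(1) by simp
qed


definition idx :: "'n::finite \<Rightarrow> nat" where
  "idx = (SOME f. bij_betw f (UNIV::'n set) {..<CARD('n)})"

lemma idx_bij: "bij_betw (idx::'n::finite \<Rightarrow> nat) UNIV {..<CARD('n)}"
proof -
  obtain f :: "'n \<Rightarrow> nat" where "bij_betw f UNIV {..<CARD('n)}"
    using finite_same_card_bij[of "UNIV::'n set" "{..<CARD('n)}"] by auto
  then show ?thesis unfolding idx_def by (metis (mono_tags, lifting) someI_ex)
qed

definition nid :: "nat \<Rightarrow> 'n::finite" where "nid = inv_into UNIV idx"

lemma nid_idx[simp]: "nid (idx j) = j"
  unfolding nid_def by (rule bij_betw_inv_into_left[OF idx_bij UNIV_I])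

lemma idx_nid[simp]: "i < CARD('n) \<Longrightarrow> idx (nid i :: 'n::finite) = i"
  unfolding nid_def by (rule bij_betw_inv_into_right[OF idx_bij]) simp

lemma idx_lt[simp]: "idx (j::'n::finite) < CARD('n)"
  using bij_betwE[OF idx_bij] by blast

lemma nid_bij: "bij_betw (nid::nat \<Rightarrow> 'n::finite) {..<CARD('n)} UNIV"
  unfolding nid_def using idx_bij by (rule bij_betw_inv_into)

definition cm :: "'a^'n^'n \<Rightarrow> 'a mat" where
  "cm A = Matrix.mat CARD('n) CARD('n) (\<lambda>(i,j). A $ nid i $ nid j)"

definition cv :: "'a^'n \<Rightarrow> 'a vec" where
  "cv v = Matrix.vec CARD('n) (\<lambda>i. v $ nid i)"

lemma cm_carrier[simp]: "cm (A::'a^'n^'n) \<in> carrier_mat CARD('n) CARD('n)"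
  unfolding cm_def by simp

lemma cm_dim[simp]: "dim_row (cm (A::'a^'n^'n)) = CARD('n)" "dim_col (cm (A::'a^'n^'n)) = CARD('n)"
  unfolding cm_def by simp_all

lemma cv_dim[simp]: "dim_vec (cv (v::'a^'n)) = CARD('n)"
  unfolding cv_def by simp

lemma cv_carrier[simp]: "cv (v::'a^'n) \<in> carrier_vec CARD('n)"
  unfolding carrier_vec_def by simp

lemma cv_index[simp]: "Matrix.vec_index (cv (v::'a^'n)) (idx j) = v $ j"
  unfolding cv_def by simp

lemma cm_mult_cv: "cm (A::complex^'n^'n) *\<^sub>v cv v = cv (A *v v)"
proof (rule eq_vecI)
  fix i assume "i < dim_vec (cv (A *v v))"
  then have i: "i < CARD('n)" by simp
  have "Matrix.vec_index (cm A *\<^sub>v cv v) i = (\<Sum>k\<in>{..<CARD('n)}. A $ nid i $ nid k * v $ nid k)"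
    using i by (simp add: scalar_prod_def cm_def cv_def atLeast0LessThan)
  also have "\<dots> = (\<Sum>j\<in>UNIV. A $ nid i $ j * v $ j)"
    by (rule sum.reindex_bij_betw[OF nid_bij, where g="\<lambda>j. A $ nid i $ j * v $ j"])
  also have "\<dots> = Matrix.vec_index (cv (A *v v)) i"
    using i by (simp add: cv_def matrix_vector_mult_def)
  finally show "Matrix.vec_index (cm A *\<^sub>v cv v) i = Matrix.vec_index (cv (A *v v)) i" .
qed simp

lemma cv_inj: assumes "cv (v::'a^'n) = cv w" shows "v = w"
proof -
  have "v $ j = w $ j" for j
    using arg_cong[OF assms, of "\<lambda>u. Matrix.vec_index u (idx j)"] by simp
  then show ?thesis by (simp add: Finite_Cartesian_Product.vec_eq_iff)
qed

lemma cv_zero: "cv (0::'a::zero^'n) = 0\<^sub>v CARD('n)"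
  by (rule eq_vecI) (simp_all add: cv_def)

lemma cv_smult: "cv (c *s (v::'a::times^'n)) = c \<cdot>\<^sub>v cv v"
  by (rule eq_vecI) (simp_all add: cv_def)

lemma cv_back: "w \<in> carrier_vec CARD('n) \<Longrightarrow> cv (\<chi> j::'n::finite. Matrix.vec_index w (idx j)) = w"
  by (rule eq_vecI) (simp_all add: cv_def)

lemma eig_iff: "c \<in> eig (A::complex^'n^'n) \<longleftrightarrow> eigenvalue (cm A) c"
proof
  assume "c \<in> eig A"
  then obtain v where v: "v \<noteq> 0" "A *v v = c *s v" unfolding eig_def by auto
  have "cv v \<noteq> 0\<^sub>v CARD('n)" using v(1) cv_inj[of v 0] cv_zero by metis
  moreover have "cm A *\<^sub>v cv v = c \<cdot>\<^sub>v cv v" by (simp add: cm_mult_cv v(2) cv_smult)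
  ultimately show "eigenvalue (cm A) c"
    unfolding eigenvalue_def eigenvector_def by (intro exI[of _ "cv v"]) auto
next
  assume "eigenvalue (cm A) c"
  then obtain w where w: "w \<in> carrier_vec CARD('n)" "w \<noteq> 0\<^sub>v CARD('n)" "cm A *\<^sub>v w = c \<cdot>\<^sub>v w"
    unfolding eigenvalue_def eigenvector_def by auto
  define v where "v = (\<chi> j::'n. Matrix.vec_index w (idx j))"
  have cvv: "cv v = w" unfolding v_def by (rule cv_back[OF w(1)])
  have "v \<noteq> 0" using w(2) cvv cv_zero by metis
  moreover have "cv (A *v v) = cv (c *s v)"
    using w(3) cvv by (simp add: cm_mult_cv[symmetric] cv_smult)
  ultimately show "c \<in> eig A" unfolding eig_def using cv_inj by blast
qed

lemma eig_roots: "eig (A::complex^'n^'n) = {c. poly (char_poly (cm A)) c = 0}"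
  using eig_iff eigenvalue_root_char_poly[OF cm_carrier] by blast

lemma finite_eig: "finite (eig (A::complex^'n^'n))"
proof -
  have "coeff (char_poly (cm A)) CARD('n) = 1"
    using degree_monic_char_poly[OF cm_carrier[of A]] by simp
  then have "char_poly (cm A) \<noteq> 0" by auto
  then show ?thesis unfolding eig_roots by (rule poly_roots_finite)
qed

lemma eig_nonempty: "eig (A::complex^'n^'n) \<noteq> {}"
proof -
  obtain as where as: "char_poly (cm A) = (\<Prod>a\<leftarrow>as. [:- a, 1:])" "length as = CARD('n)"
    using char_poly_factorized[OF cm_carrier] by blast
  then have "as \<noteq> []" by auto
  then obtain a where a: "a \<in> set as" by (cases as) auto
  have "poly (char_poly (cm A)) a = 0" unfolding as(1) using a
    by (simp add: poly_prod_list prod_list_zero_iff)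
  then show ?thesis unfolding eig_roots by auto
qed

lemma sr_le_iff: "spectral_radius (A::complex^'n^'n) \<le> x \<longleftrightarrow> (\<forall>c\<in>eig A. cmod c \<le> x)"
  unfolding sr_eq using finite_imageI[OF finite_eig[of A], of cmod] eig_nonempty[of A]
  by (simp add: Max_le_iff)

lemma sr_ge: "c \<in> eig (A::complex^'n^'n) \<Longrightarrow> cmod c \<le> spectral_radius A"
  unfolding sr_eq using finite_imageI[OF finite_eig[of A], of cmod] by (simp add: Max_ge)

lemma sr_le_norm2: "spectral_radius (A::complex^'n^'n) \<le> norm2 A"
  using sr_le_iff eig_le_norm2 by blast

definition DD :: "complex^'n^'n \<Rightarrow> complex" where
  "DD Q = Determinant.det (- char_matrix (cm Q) 1)"

lemma DD_poly: "DD Q = poly (char_poly (cm Q)) 1"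
  unfolding DD_def by (rule char_poly_matrix[OF cm_carrier, symmetric])

lemma DD_zero: "1 \<in> eig Q \<Longrightarrow> DD Q = 0"
  unfolding DD_poly eig_roots by simp

lemma prod_list_lower:
  assumes "\<forall>a\<in>set as. cmod a \<le> \<gamma>" "\<gamma> \<le> 1"
  shows "(1 - \<gamma>) ^ length as \<le> cmod (prod_list (map (\<lambda>a. 1 - a) as))"
  using assms
proof (induction as)
  case Nil then show ?case by simp
next
  case (Cons a as)
  have h1: "1 - \<gamma> \<le> cmod (1 - a)"
    using Cons.prems norm_triangle_ineq2[of 1 a] by simp
  have h2: "(1 - \<gamma>) ^ length as \<le> cmod (prod_list (map (\<lambda>a. 1 - a) as))"
    using Cons by simp
  have "(1 - \<gamma>) * (1 - \<gamma>) ^ length as \<le> cmod (1 - a) * cmod (prod_list (map (\<lambda>a. 1 - a) as))"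
    by (rule mult_mono[OF h1 h2]) (use Cons.prems in auto)
  then show ?case by (simp add: norm_mult)
qed

lemma DD_lower:
  assumes "spectral_radius (Q::complex^'n^'n) \<le> \<gamma>" "\<gamma> \<le> 1"
  shows "(1 - \<gamma>) ^ CARD('n) \<le> cmod (DD Q)"
proof -
  obtain as where as: "char_poly (cm Q) = (\<Prod>a\<leftarrow>as. [:- a, 1:])" "length as = CARD('n)"
    using char_poly_factorized[OF cm_carrier] by blast
  have "\<forall>a\<in>set as. cmod a \<le> \<gamma>"
  proof
    fix a assume "a \<in> set as"
    then have "a \<in> eig Q" unfolding eig_roots as(1)
      by (simp add: poly_prod_list prod_list_zero_iff)
    then show "cmod a \<le> \<gamma>" using assms(1) sr_le_iff by blast
  qed
  moreover have "DD Q = prod_list (map (\<lambda>a. 1 - a) as)"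
    unfolding DD_poly as(1) by (simp add: poly_prod_list o_def)
  ultimately show ?thesis using prod_list_lower[OF _ assms(2)] as(2) by metis
qed

lemma DD_formula: "DD (Q::complex^'n^'n) = (\<Sum>p\<in>{p. p permutes {0..<CARD('n)}}. signof p *
    (\<Prod>i = 0..<CARD('n). (if i = p i then 1 else 0) - Q $ nid i $ nid (p i)))"
proof -
  have c: "- char_matrix (cm Q) 1 \<in> carrier_mat CARD('n) CARD('n)"
    by (simp add: char_matrix_def)
  show ?thesis unfolding DD_def det_def'[OF c]
  proof (rule sum.cong[OF refl])
    fix p assume "p \<in> {p. p permutes {0..<CARD('n)}}"
    then have p: "\<And>i. i < CARD('n) \<Longrightarrow> p i < CARD('n)"
      by (simp add: permutes_in_image)
    show "signof p * (\<Prod>i = 0..<CARD('n). (- char_matrix (cm Q) 1) $$ (i, p i)) =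
      signof p * (\<Prod>i = 0..<CARD('n). (if i = p i then 1 else 0) - Q $ nid i $ nid (p i))"
      by (rule arg_cong[where f="\<lambda>x. signof p * x"], rule prod.cong[OF refl])
        (use p in \<open>auto simp: char_matrix_def cm_def\<close>)
  qed
qed

lemma DD_tendsto: "(f \<longlongrightarrow> Q) F \<Longrightarrow> ((\<lambda>x. DD (f x :: complex^'n^'n)) \<longlongrightarrow> DD Q) F"
  unfolding DD_formula by (intro tendsto_sum tendsto_mult tendsto_const tendsto_prod tendsto_diff tendsto_vec_nth)



lemma shift_pow: "(shift_plus ^^ n) i = (\<lambda>k. i (n + k))"
  by (induction n) (auto simp: shift_plus_def)

lemma shift_in:
  assumes "shift_plus ` \<Lambda> \<subseteq> \<Lambda>" "i \<in> \<Lambda>"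
  shows "(\<lambda>k. i (n + k)) \<in> \<Lambda>"
proof -
  have "(shift_plus ^^ n) i \<in> \<Lambda>"
    by (induction n) (use assms in auto)
  then show ?thesis by (simp add: shift_pow)
qed

lemma mprod_add: "mprod S i (n + m) = mprod S (\<lambda>k. i (n + k)) m ** mprod S i n"
  by (induction m) (simp_all add: matrix_mul_assoc)

lemma Splus_mem: "j \<in> \<Lambda> \<Longrightarrow> l \<ge> 1 \<Longrightarrow> mprod S j l \<in> Splus S \<Lambda> l"
  unfolding Splus_def by auto

lemma Splus_all_mem: "A \<in> Splus S \<Lambda> l \<Longrightarrow> A \<in> Splus_all S \<Lambda>"
  unfolding Splus_all_def by auto

lemma tendsto_matmul:
  fixes f g :: "'a \<Rightarrow> 'b::real_normed_field^'n^'n"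
  assumes "(f \<longlongrightarrow> A) F" "(g \<longlongrightarrow> B) F"
  shows "((\<lambda>x. f x ** g x) \<longlongrightarrow> A ** B) F"
proof -
  have "((\<lambda>x. (\<chi> i j. \<Sum>k\<in>UNIV. f x $ i $ k * g x $ k $ j)) \<longlongrightarrow>
     (\<chi> i j. \<Sum>k\<in>UNIV. A $ i $ k * B $ k $ j)) F"
    by (intro tendsto_vec_lambda tendsto_sum tendsto_mult tendsto_vec_nth assms)
  then show ?thesis unfolding matrix_matrix_mult_def .
qed

lemma cont_mprod:
  assumes "continuous_on UNIV S"
  shows "continuous_on UNIV (\<lambda>x::nat\<Rightarrow>'i::topological_space. mprod S x n)"
proof (induction n)
  case 0 then show ?case by simp
next
  case (Suc n)
  have c1: "continuous_on UNIV (\<lambda>x::nat\<Rightarrow>'i. S (x n))"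
    by (rule continuous_on_compose2[OF assms continuous_on_product_coordinates]) auto
  show ?case unfolding continuous_on_def
  proof
    fix x :: "nat \<Rightarrow> 'i" assume "x \<in> UNIV"
    show "((\<lambda>x. mprod S x (Suc n)) \<longlongrightarrow> mprod S x (Suc n)) (at x within UNIV)"
      using tendsto_matmul[of "\<lambda>x. S (x n)" "S (x n)" "at x within UNIV" "\<lambda>x. mprod S x n" "mprod S x n"]
        c1 Suc unfolding continuous_on_def by simp
  qed
qed



lemma norm_bound_from_norm2:
  assumes "norm2 (A::complex^'n^'n) \<le> \<beta>"
  shows "norm A \<le> real CARD('n) * real CARD('n) * \<beta>"
  using norm_le_norm2[of A] assms
  by (meson dual_order.trans mult_left_mono of_nat_0_le_iff zero_le_mult_iff)

lemma back_dir:
  fixes S :: "'i \<Rightarrow> complex^'n^'n" and \<Lambda> :: "(nat \<Rightarrow> 'i) set"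
  assumes inv: "shift_plus ` \<Lambda> \<subseteq> \<Lambda>"
    and bnd: "\<forall>A\<in>Splus_all S \<Lambda>. norm2 A \<le> \<beta>"
    and g: "\<gamma> < 1" and N: "N \<ge> 1"
    and sp: "\<forall>l\<ge>N. \<forall>A\<in>Splus S \<Lambda> l. spectral_radius A \<le> \<gamma>"
    and i: "i \<in> \<Lambda>"
  shows "(\<lambda>n. mprod S i n) \<longlonglongrightarrow> 0"
proof (rule ccontr)
  define P where "P = (\<lambda>n. mprod S i n)"
  define C where "C = real CARD('n) * real CARD('n) * \<beta>"
  have prodbnd: "norm (mprod S j l) \<le> C" if "j \<in> \<Lambda>" for j l
  proof (cases "l = 0")
    case True
    have "mat 1 \<in> Splus_all S \<Lambda>" unfolding Splus_all_def Splus_def by auto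
    then show ?thesis using True bnd norm_bound_from_norm2 unfolding C_def by auto
  next
    case False
    then have "mprod S j l \<in> Splus S \<Lambda> l" using Splus_mem[OF that, of l S] by simp
    then have "mprod S j l \<in> Splus_all S \<Lambda>" by (rule Splus_all_mem)
    then show ?thesis using bnd norm_bound_from_norm2 unfolding C_def by auto
  qed
  assume "\<not> (\<lambda>n. mprod S i n) \<longlonglongrightarrow> 0"
  then have "\<not> (\<forall>r>0. \<exists>no. \<forall>n\<ge>no. norm (P n - 0) < r)"
    unfolding P_def LIMSEQ_iff by simp
  then obtain \<delta> where \<delta>: "\<delta> > 0" "\<forall>no. \<exists>n\<ge>no. norm (P n) \<ge> \<delta>"
    by (auto simp: not_less)
  then obtain gg where gg: "\<And>no. gg no \<ge> no \<and> norm (P (gg no)) \<ge> \<delta>"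
    by metis
  define m where "m = rec_nat (gg 0) (\<lambda>_ k. gg (k + N))"
  have m0: "m 0 = gg 0" and mS: "\<And>k. m (Suc k) = gg (m k + N)" unfolding m_def by simp_all
  have mgap: "m (Suc k) \<ge> m k + N" for k using gg mS by metis
  have mnorm: "norm (P (m k)) \<ge> \<delta>" for k by (cases k) (simp_all add: m0 mS gg)
  have m_mono: "strict_mono m"
  proof (rule strict_monoI_Suc)
    fix k show "m k < m (Suc k)" using mgap[of k] N by linarith
  qed
  have "bounded (range (\<lambda>k. P (m k)))"
    unfolding bounded_iff using prodbnd[OF i] P_def by auto
  then obtain Pinf r1 where r1: "strict_mono r1" "((\<lambda>k. P (m k)) \<circ> r1) \<longlonglongrightarrow> Pinf"
    using bounded_imp_convergent_subsequence by blast
  define mm where "mm = m \<circ> r1"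
  have mm_gap: "mm (Suc k) \<ge> mm k + N" for k
  proof -
    have "r1 (Suc k) \<ge> Suc (r1 k)" using r1(1) by (simp add: strict_mono_def Suc_leI)
    then have "m (r1 (Suc k)) \<ge> m (Suc (r1 k))" using m_mono by (simp add: strict_mono_less_eq)
    then show ?thesis using mgap[of "r1 k"] unfolding mm_def by simp
  qed
  have Pmm: "(\<lambda>k. P (mm k)) \<longlonglongrightarrow> Pinf" using r1(2) unfolding mm_def by (simp add: o_def)
  have Pmm1: "(\<lambda>k. P (mm (Suc k))) \<longlonglongrightarrow> Pinf" using LIMSEQ_Suc[OF Pmm] .
  define Q where "Q = (\<lambda>k. mprod S (\<lambda>t. i (mm k + t)) (mm (Suc k) - mm k))"
  have QP: "P (mm (Suc k)) = Q k ** P (mm k)" for k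
  proof -
    have "mm (Suc k) = mm k + (mm (Suc k) - mm k)" using mm_gap[of k] by simp
    then show ?thesis unfolding P_def Q_def by (metis mprod_add)
  qed
  have Qin: "Q k \<in> Splus S \<Lambda> (mm (Suc k) - mm k)" for k
    unfolding Q_def by (rule Splus_mem[OF shift_in[OF inv i]]) (use mm_gap[of k] N in simp)
  have Qsr: "spectral_radius (Q k) \<le> \<gamma>" for k
  proof -
    have "mm (Suc k) - mm k \<ge> N" using mm_gap[of k] by simp
    then show ?thesis using sp Qin[of k] by blast
  qed
  have "bounded (range Q)"
    unfolding bounded_iff Q_def using prodbnd[OF shift_in[OF inv i]] by auto
  then obtain Qinf r2 where r2: "strict_mono r2" "(Q \<circ> r2) \<longlonglongrightarrow> Qinf"
    using bounded_imp_convergent_subsequence by blast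
  have lim1: "(\<lambda>k. Q (r2 k) ** P (mm (r2 k))) \<longlonglongrightarrow> Qinf ** Pinf"
    by (rule tendsto_matmul) (use r2 LIMSEQ_subseq_LIMSEQ[OF Pmm r2(1)] in \<open>simp_all add: o_def\<close>)
  have lim2: "(\<lambda>k. Q (r2 k) ** P (mm (r2 k))) \<longlonglongrightarrow> Pinf"
    using LIMSEQ_subseq_LIMSEQ[OF Pmm1 r2(1)] by (simp add: o_def QP)
  have QPinf: "Qinf ** Pinf = Pinf" using LIMSEQ_unique[OF lim1 lim2] .
  have "\<delta> \<le> norm Pinf"
    by (rule LIMSEQ_le_const[OF tendsto_norm[OF Pmm]]) (use mnorm mm_def in auto)
  then have "Pinf \<noteq> 0" using \<delta> by auto
  then obtain a b where ab: "Pinf $ a $ b \<noteq> 0" by (metis Finite_Cartesian_Product.vec_eq_iff zero_index)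
  define w where "w = (\<chi> r. Pinf $ r $ b)"
  have "w \<noteq> 0" using ab unfolding w_def by (metis vec_lambda_beta zero_index)
  moreover have "Qinf *v w = 1 *s w"
  proof -
    have "(Qinf *v w) $ r = Pinf $ r $ b" for r
      using arg_cong[OF QPinf, of "\<lambda>M. M $ r $ b"]
      unfolding w_def by (simp add: matrix_vector_mult_def matrix_matrix_mult_def)
    then show ?thesis unfolding w_def by (simp add: Finite_Cartesian_Product.vec_eq_iff)
  qed
  ultimately have "1 \<in> eig Qinf" unfolding eig_def by blast
  then have D0: "DD Qinf = 0" by (rule DD_zero)
  have "(\<lambda>k. cmod (DD (Q (r2 k)))) \<longlonglongrightarrow> cmod (DD Qinf)"
    by (rule tendsto_norm, rule DD_tendsto) (use r2(2) in \<open>simp add: o_def\<close>)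
  then have "(1 - \<gamma>) ^ CARD('n) \<le> cmod (DD Qinf)"
    by (rule LIMSEQ_le_const) (use DD_lower[OF Qsr] g in auto)
  moreover have "(1 - \<gamma>) ^ CARD('n) > 0" using g by simp
  ultimately show False using D0 by simp
qed



lemma fwd_dir:
  fixes S :: "'i::metric_space \<Rightarrow> complex^'n^'n" and \<Lambda> :: "(nat \<Rightarrow> 'i) set"
  assumes cS: "continuous_on UNIV S" and ne: "\<Lambda> \<noteq> {}" and cpt: "compact \<Lambda>"
    and inv: "shift_plus ` \<Lambda> \<subseteq> \<Lambda>"
    and conv: "\<forall>i\<in>\<Lambda>. (\<lambda>n. mprod S i n) \<longlonglongrightarrow> 0"
  shows "(\<exists>\<beta>>0. \<forall>A\<in>Splus_all S \<Lambda>. norm2 A \<le> \<beta>) \<and>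
          (\<exists>\<gamma> (N::nat). 0 < \<gamma> \<and> \<gamma> < 1 \<and> N \<ge> 1 \<and>
             (\<forall>l\<ge>N. \<forall>A\<in>Splus S \<Lambda> l. spectral_radius A \<le> \<gamma>))"
proof -
  define C where "C = real CARD('n) * real CARD('n)"
  have C: "C > 0" unfolding C_def by simp
  have ex1: "\<exists>n\<ge>1. norm2 (mprod S j n) < 1/2" if j: "j \<in> \<Lambda>" for j
  proof -
    have "\<exists>no. \<forall>n\<ge>no. norm (mprod S j n - 0) < 1 / (2 * C)"
      using conv j C unfolding LIMSEQ_iff by simp
    then obtain no where no: "\<forall>n\<ge>no. norm (mprod S j n) < 1 / (2 * C)" by auto
    define n where "n = max no 1"
    have "norm2 (mprod S j n) \<le> C * norm (mprod S j n)"
      using norm2_le_norm unfolding C_def by blast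
    also have "\<dots> < C * (1 / (2 * C))"
      using no C unfolding n_def by (intro mult_strict_left_mono) auto
    also have "\<dots> = 1/2" using C by simp
    finally show ?thesis unfolding n_def by (intro exI[of _ "max no 1"]) auto
  qed
  define nn where "nn j = (SOME n. n \<ge> 1 \<and> norm2 (mprod S j n) < 1/2)" for j
  have nn: "nn j \<ge> 1 \<and> norm2 (mprod S j (nn j)) < 1/2" if "j \<in> \<Lambda>" for j
    unfolding nn_def using someI_ex[OF ex1[OF that]] .
  define U where "U j = {x. norm2 (mprod S x (nn j)) < 1/2}" for j
  have openU: "open (U j)" for j
  proof -
    have "continuous_on UNIV (\<lambda>x. norm2 (mprod S x (nn j)))"
      by (rule continuous_on_compose2[OF continuous_norm2 cont_mprod[OF cS]]) auto
    then show ?thesis unfolding U_def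
      by (rule open_Collect_less[OF _ continuous_on_const])
  qed
  have cover: "\<Lambda> \<subseteq> \<Union> (U ` \<Lambda>)" using nn unfolding U_def by auto
  obtain T where T: "T \<subseteq> \<Lambda>" "finite T" "\<Lambda> \<subseteq> \<Union> (U ` T)"
    by (rule compactE_image[of \<Lambda> \<Lambda> U, OF cpt openU cover]) blast
  define M where "M = Max (insert 1 (nn ` T))"
  have M1: "M \<ge> 1" unfolding M_def using T(2) by simp
  have good: "\<exists>m. 1 \<le> m \<and> m \<le> M \<and> norm2 (mprod S j m) < 1/2" if jL: "j \<in> \<Lambda>" for j
  proof -
    obtain t where t: "t \<in> T" "j \<in> U t" using T(3) jL by auto
    have "nn t \<le> M" unfolding M_def using T(2) t(1) by simp
    then show ?thesis using t nn[of t] T(1) unfolding U_def by auto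
  qed
  have "compact ((\<lambda>j. S (j 0)) ` \<Lambda>)"
  proof (rule compact_continuous_image[OF _ cpt])
    have "continuous_on UNIV (\<lambda>j::nat\<Rightarrow>'i. S (j 0))"
      by (rule continuous_on_compose2[OF cS continuous_on_product_coordinates]) auto
    then show "continuous_on \<Lambda> (\<lambda>j. S (j 0))" by (rule continuous_on_subset) auto
  qed
  then obtain K where K: "\<forall>x\<in>(\<lambda>j. S (j 0)) ` \<Lambda>. norm x \<le> K"
    using compact_imp_bounded bounded_iff by metis
  define K2 where "K2 = max 1 (C * K)"
  have K21: "K2 \<ge> 1" unfolding K2_def by simp
  have Sb: "norm2 (S (j k)) \<le> K2" if "j \<in> \<Lambda>" for j k
  proof -
    have "(\<lambda>t. j (k + t)) \<in> \<Lambda>" by (rule shift_in[OF inv that])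
    then have "norm (S (j k)) \<le> K" using K by force
    then have "C * norm (S (j k)) \<le> C * K" using C by simp
    then show ?thesis using norm2_le_norm[of "S (j k)"] unfolding K2_def C_def by linarith
  qed
  have powb: "norm2 (mprod S j n) \<le> K2 ^ n" if "j \<in> \<Lambda>" for j n
  proof (induction n)
    case 0 then show ?case using norm2_id by simp
  next
    case (Suc n)
    have "norm2 (mprod S j (Suc n)) \<le> norm2 (S (j n)) * norm2 (mprod S j n)"
      by (simp add: norm2_mult)
    also have "\<dots> \<le> K2 * K2 ^ n"
      by (rule mult_mono[OF Sb[OF that] Suc]) (use K21 norm2_nonneg in auto)
    finally show ?case by simp
  qed
  define B where "B = K2 ^ M"
  have B1: "B \<ge> 1" unfolding B_def using K21 by simp
  have main: "\<forall>j\<in>\<Lambda>. norm2 (mprod S j n) \<le> B * (1/2) ^ (n div M)" for n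
  proof (induction n rule: less_induct)
    case (less n)
    show ?case
    proof
      fix j assume j: "j \<in> \<Lambda>"
      show "norm2 (mprod S j n) \<le> B * (1/2) ^ (n div M)"
      proof (cases "n < M")
        case True
        then have "n div M = 0" by simp
        moreover have "K2 ^ n \<le> K2 ^ M" using True K21 by (intro power_increasing) auto
        ultimately show ?thesis using powb[OF j, of n] unfolding B_def by simp
      next
        case False
        obtain m where m: "1 \<le> m" "m \<le> M" "norm2 (mprod S j m) < 1/2" using good[OF j] by auto
        have nm: "n = m + (n - m)" using False m by simp
        have jm: "(\<lambda>t. j (m + t)) \<in> \<Lambda>" by (rule shift_in[OF inv j])
        have IH: "norm2 (mprod S (\<lambda>t. j (m + t)) (n - m)) \<le> B * (1/2) ^ ((n - m) div M)"
        proof -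
          have "n - m < n" using m False M1 by simp
          then show ?thesis using less[of "n - m"] jm by blast
        qed
        have "norm2 (mprod S j n) \<le> norm2 (mprod S (\<lambda>t. j (m + t)) (n - m)) * norm2 (mprod S j m)"
          using norm2_mult mprod_add[of S j m "n - m"] nm by metis
        also have "\<dots> \<le> B * (1/2) ^ ((n - m) div M) * (1/2)"
          by (rule mult_mono[OF IH]) (use m(3) norm2_nonneg B1 in auto)
        also have "\<dots> = B * (1/2) ^ ((n - m) div M + 1)" by simp
        also have "\<dots> \<le> B * (1/2) ^ (n div M)"
        proof -
          have "n div M \<le> (n - m + M) div M" using m False by (intro div_le_mono) simp
          also have "\<dots> = (n - m) div M + 1" using M1 by simp
          finally have "n div M \<le> (n - m) div M + 1" .
          then have "(1/2::real) ^ ((n - m) div M + 1) \<le> (1/2) ^ (n div M)"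
            by (intro power_decreasing) auto
          then show ?thesis using B1 by simp
        qed
        finally show ?thesis .
      qed
    qed
  qed
  have allb: "norm2 A \<le> B" if AS: "A \<in> Splus_all S \<Lambda>" for A
  proof -
    obtain l where "A \<in> Splus S \<Lambda> l" using AS unfolding Splus_all_def by auto
    then consider "A = mat 1" | j where "j \<in> \<Lambda>" "A = mprod S j l"
      unfolding Splus_def by (auto split: if_splits)
    then show ?thesis
    proof cases
      case 1
      have "norm2 (mat 1 :: complex^'n^'n) \<le> 1" by (rule norm2_id)
      then show ?thesis unfolding 1 using B1 by linarith
    next
      case 2
      have "(1/2::real) ^ (l div M) \<le> 1" by (simp add: power_le_one)
      then have "B * (1/2) ^ (l div M) \<le> B" using B1 by (simp add: mult_left_le)
      then show ?thesis using main[of l] 2 by force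
    qed
  qed
  obtain k where k: "(1/2::real) ^ k < 1 / (2 * B)"
    using real_arch_pow_inv[of "1 / (2 * B)" "1/2"] B1 by auto
  have part2: "\<forall>l\<ge>M * k + 1. \<forall>A\<in>Splus S \<Lambda> l. spectral_radius A \<le> 1/2"
  proof (intro allI impI ballI)
    fix l A assume l: "M * k + 1 \<le> l" and A: "A \<in> Splus S \<Lambda> l"
    then obtain j where j: "j \<in> \<Lambda>" "A = mprod S j l" unfolding Splus_def by (auto split: if_splits)
    have "k \<le> l div M"
    proof -
      have "(M * k) div M \<le> l div M" using l by (intro div_le_mono) simp
      then show ?thesis using M1 by simp
    qed
    then have "(1/2::real) ^ (l div M) \<le> (1/2) ^ k" by (intro power_decreasing) auto
    then have "B * (1/2) ^ (l div M) \<le> B * (1/2) ^ k" using B1 by simp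
    also have "\<dots> \<le> B * (1 / (2 * B))" using k B1 by (intro mult_left_mono) auto
    also have "\<dots> = 1/2" using B1 by simp
    finally have "norm2 A \<le> 1/2" using main[of l] j by force
    then show "spectral_radius A \<le> 1/2" using sr_le_norm2[of A] by linarith
  qed
  show ?thesis
  proof
    show "\<exists>\<beta>>0. \<forall>A\<in>Splus_all S \<Lambda>. norm2 A \<le> \<beta>" using allb B1 by (intro exI[of _ B]) auto
    show "\<exists>\<gamma> (N::nat). 0 < \<gamma> \<and> \<gamma> < 1 \<and> N \<ge> 1 \<and> (\<forall>l\<ge>N. \<forall>A\<in>Splus S \<Lambda> l. spectral_radius A \<le> \<gamma>)"
      using part2 by (intro exI[of _ "1/2::real"] exI[of _ "M * k + 1"]) auto
  qed
qed


theorem lemma3p1: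
  fixes S :: "'i::metric_space \<Rightarrow> complex^'n^'n"
    and \<Lambda> :: "(nat \<Rightarrow> 'i) set"
  assumes "continuous_on UNIV S"
    and "\<Lambda> \<noteq> {}"
    and "compact \<Lambda>"
    and "shift_plus ` \<Lambda> \<subseteq> \<Lambda>"
  shows "(\<forall>i\<in>\<Lambda>. (\<lambda>n. mprod S i n) \<longlonglongrightarrow> 0) \<longleftrightarrow>
         ((\<exists>\<beta>>0. \<forall>A\<in>Splus_all S \<Lambda>. norm2 A \<le> \<beta>) \<and>
          (\<exists>\<gamma> (N::nat). 0 < \<gamma> \<and> \<gamma> < 1 \<and> N \<ge> 1 \<and>
             (\<forall>l\<ge>N. \<forall>A\<in>Splus S \<Lambda> l. spectral_radius A \<le> \<gamma>)))"
proof
  assume "\<forall>i\<in>\<Lambda>. (\<lambda>n. mprod S i n) \<longlonglongrightarrow> 0"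
  then show "(\<exists>\<beta>>0. \<forall>A\<in>Splus_all S \<Lambda>. norm2 A \<le> \<beta>) \<and>
          (\<exists>\<gamma> (N::nat). 0 < \<gamma> \<and> \<gamma> < 1 \<and> N \<ge> 1 \<and>
             (\<forall>l\<ge>N. \<forall>A\<in>Splus S \<Lambda> l. spectral_radius A \<le> \<gamma>))"
    by (rule fwd_dir[OF assms])
next
  assume h: "(\<exists>\<beta>>0. \<forall>A\<in>Splus_all S \<Lambda>. norm2 A \<le> \<beta>) \<and>
          (\<exists>\<gamma> (N::nat). 0 < \<gamma> \<and> \<gamma> < 1 \<and> N \<ge> 1 \<and>
             (\<forall>l\<ge>N. \<forall>A\<in>Splus S \<Lambda> l. spectral_radius A \<le> \<gamma>))"
  then obtain \<beta> \<gamma> N where b: "\<forall>A\<in>Splus_all S \<Lambda>. norm2 A \<le> \<beta>"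
    and g: "\<gamma> < 1" "(N::nat) \<ge> 1" "\<forall>l\<ge>N. \<forall>A\<in>Splus S \<Lambda> l. spectral_radius A \<le> \<gamma>"
    by blast
  show "\<forall>i\<in>\<Lambda>. (\<lambda>n. mprod S i n) \<longlonglongrightarrow> 0"
    using back_dir[OF assms(4) b g] by blast
qed

end
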